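(* Let $n\in\mathbb{N}$, let $E=E(\mathbb{R}^n)$ and $X=X(\mathbb{R}^n)$ be rearrangement-invariant spaces with Luxemburg representations $\widetilde{E}(0,\infty)$, $\widetilde{X}(0,\infty)$, and let $\Phi\in B_n(\infty)$. Then the embedding $K_3\mapsto\widetilde{X}(0,\infty)$ holds if and only if the operator $T_\Phi$ is bounded from $\widetilde{E}(0,\infty)$ to $\widetilde{X}(0,\infty)$, i.e. there is $C>0$ with $\|T_\Phi f\|_{\widetilde{X}}\le C\|f\|_{\widetilde{E}}$ for all $f\in\widetilde{E}(0,\infty)$, where $(T_\Phi f)(x)=\sup_{x<t<\infty}\Phi(t^{1/n})\,t\,f^{**}(t)$.
   Context: A rearrangement-invariant space (RIS) on $\mathbb{R}^n$ is a Banach function space (Bennett–Sharpley) with respect to Lebesgue measure whose norm satisfies $\|f\|\le\|g\|$ whenever $f^*\le g^*$; $f^*(t)=\inf\{y>0:|\{|f|>y\}|\le t\}$, $f^{**}(t)=\frac1t\int_0^tf^*$. The Luxemburg representation $\widetilde{X}(0,\infty)$ of $X$ is the RIS on $(0,\infty)$ with $\|f\|_X=\|f^*\|_{\widetilde{X}}$ (similarly $\widetilde{E}$). Class $B_n(\infty)$: $\Phi:(0,\infty)\to(0,\infty)$ decreasing and continuous with $\int_0^r\Phi(\rho)\rho^{n-1}d\rho\le C\Phi(r)r^n$ for all $r>0$, some $C>0$. $K_3=\{h:\ h(t)=\sup_{t<\tau<\infty}\tau\Phi(\tau^{1/n})u^{**}(\tau)\ \forall t>0,\text{ for some }u\in E\}$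 with $\rho_{K_3}(h)=\inf\{\|u\|_E:\ u\in E,\ \sup_{t<\tau<\infty}\tau\Phi(\tau^{1/n})u^{**}(\tau)=h(t)\ \forall t>0\}$. The embedding $K_3\mapsto\widetilde{X}$ means $K_3\subset\widetilde{X}$ and $\|h\|_{\widetilde{X}}\le C\rho_{K_3}(h)$ for all $h\in K_3$. *)

theory Defs
  imports "HOL-Analysis.Analysis"
begin

text \<open>Function norms in the sense of Bennett--Sharpley (properties P1--P5), acting on
  nonnegative measurable functions with values in [0,\<infinity>].\<close>

definition function_norm :: "'a measure \<Rightarrow> (('a \<Rightarrow> ennreal) \<Rightarrow> ennreal) \<Rightarrow> bool" where
  "function_norm M \<rho> \<longleftrightarrow>
     (\<forall>f\<in>borel_measurable M. \<rho> f = 0 \<longleftrightarrow> (AE x in M. f x = 0)) \<and>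
     (\<forall>f\<in>borel_measurable M. \<forall>a::real. 0 \<le> a \<longrightarrow> \<rho> (\<lambda>x. ennreal a * f x) = ennreal a * \<rho> f) \<and>
     (\<forall>f\<in>borel_measurable M. \<forall>g\<in>borel_measurable M. \<rho> (\<lambda>x. f x + g x) \<le> \<rho> f + \<rho> g) \<and>
     (\<forall>f\<in>borel_measurable M. \<forall>g\<in>borel_measurable M. (AE x in M. g x \<le> f x) \<longrightarrow> \<rho> g \<le> \<rho> f) \<and>
     (\<forall>fs f. (\<forall>k. fs k \<in> borel_measurable M) \<longrightarrow> f \<in> borel_measurable M \<longrightarrow>
        (AE x in M. incseq (\<lambda>k. fs k x) \<and> f x = (SUP k. fs k x)) \<longrightarrow>
        \<rho> f = (SUP k. \<rho> (fs k))) \<and>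
     (\<forall>A\<in>sets M. emeasure M A < \<infinity> \<longrightarrow> \<rho> (indicator A) < \<infinity>) \<and>
     (\<forall>A\<in>sets M. emeasure M A < \<infinity> \<longrightarrow>
        (\<exists>c::real. \<forall>f\<in>borel_measurable M. (\<integral>\<^sup>+x\<in>A. f x \<partial>M) \<le> ennreal c * \<rho> f))"

text \<open>Decreasing rearrangement f* (t) = inf {y > 0 : mu{f > y} <= t}  (inf of empty set = \<infinity>)
  and maximal function f** (t) = (1/t) int_0^t f*.\<close>

definition rearr :: "'a measure \<Rightarrow> ('a \<Rightarrow> ennreal) \<Rightarrow> real \<Rightarrow> ennreal" where
  "rearr M f t = Inf {y::ennreal. 0 < y \<and> emeasure M {x\<in>space M. y < f x} \<le> ennreal t}"

definition dstar :: "'a measure \<Rightarrow> ('a \<Rightarrow> ennreal) \<Rightarrow> real \<Rightarrow> ennreal" where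
  "dstar M f t = (\<integral>\<^sup>+s\<in>{0<..<t}. rearr M f s \<partial>lborel) / ennreal t"

definition halfline :: "real measure" where
  "halfline = restrict_space lebesgue {0<..}"

definition rearrangement_invariant :: "'a measure \<Rightarrow> (('a \<Rightarrow> ennreal) \<Rightarrow> ennreal) \<Rightarrow> bool" where
  "rearrangement_invariant M \<rho> \<longleftrightarrow>
     (\<forall>f\<in>borel_measurable M. \<forall>g\<in>borel_measurable M.
        (\<forall>t>0. rearr M f t \<le> rearr M g t) \<longrightarrow> \<rho> f \<le> \<rho> g)"

definition RIS :: "'a measure \<Rightarrow> (('a \<Rightarrow> ennreal) \<Rightarrow> ennreal) \<Rightarrow> bool" where
  "RIS M \<rho> \<longleftrightarrow> function_norm M \<rho> \<and> rearrangement_invariant M \<rho>"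

definition luxemburg_rep :: "'a measure \<Rightarrow> (('a \<Rightarrow> ennreal) \<Rightarrow> ennreal) \<Rightarrow> ((real \<Rightarrow> ennreal) \<Rightarrow> ennreal) \<Rightarrow> bool" where
  "luxemburg_rep M \<rho> \<rho>t \<longleftrightarrow> RIS halfline \<rho>t \<and> (\<forall>f\<in>borel_measurable M. \<rho> f = \<rho>t (rearr M f))"

definition in_space :: "'a measure \<Rightarrow> (('a \<Rightarrow> ennreal) \<Rightarrow> ennreal) \<Rightarrow> ('a \<Rightarrow> real) \<Rightarrow> bool" where
  "in_space M \<rho> u \<longleftrightarrow> u \<in> borel_measurable M \<and> \<rho> (\<lambda>x. ennreal \<bar>u x\<bar>) < \<infinity>"

definition class_B :: "nat \<Rightarrow> (real \<Rightarrow> real) \<Rightarrow> bool" where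
  "class_B n \<Phi> \<longleftrightarrow>
     (\<forall>r>0. 0 < \<Phi> r) \<and>
     (\<forall>s t. 0 < s \<longrightarrow> s \<le> t \<longrightarrow> \<Phi> t \<le> \<Phi> s) \<and>
     continuous_on {0<..} \<Phi> \<and>
     (\<exists>C>0. \<forall>r>0. (\<integral>\<^sup>+\<rho>\<in>{0<..<r}. ennreal (\<Phi> \<rho> * \<rho> ^ (n - 1)) \<partial>lborel)
                  \<le> ennreal (C * \<Phi> r * r ^ n))"

text \<open>Top n Phi M u t = sup_{t<tau<\<infinity>} tau Phi(tau^(1/n)) |u|**(tau).
  With M = halfline this is the operator T_Phi; with M = lebesgue on R^n it gives the
  elements of K_3.\<close>

definition Top :: "nat \<Rightarrow> (real \<Rightarrow> real) \<Rightarrow> 'a measure \<Rightarrow> ('a \<Rightarrow> real) \<Rightarrow> real \<Rightarrow> ennreal" where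
  "Top n \<Phi> M u t = (SUP \<tau>\<in>{t<..}. ennreal (\<Phi> (\<tau> powr (1 / real n)) * \<tau>) * dstar M (\<lambda>x. ennreal \<bar>u x\<bar>) \<tau>)"

definition K3 :: "nat \<Rightarrow> (real \<Rightarrow> real) \<Rightarrow> 'a measure \<Rightarrow> (('a \<Rightarrow> ennreal) \<Rightarrow> ennreal) \<Rightarrow> (real \<Rightarrow> ennreal) set" where
  "K3 n \<Phi> M \<rho>E = {h. \<exists>u. in_space M \<rho>E u \<and> (\<forall>t>0. h t = Top n \<Phi> M u t)}"

definition rho_K3 :: "nat \<Rightarrow> (real \<Rightarrow> real) \<Rightarrow> 'a measure \<Rightarrow> (('a \<Rightarrow> ennreal) \<Rightarrow> ennreal) \<Rightarrow> (real \<Rightarrow> ennreal) \<Rightarrow> ennreal" where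
  "rho_K3 n \<Phi> M \<rho>E h = Inf {\<rho>E (\<lambda>x. ennreal \<bar>u x\<bar>) | u. in_space M \<rho>E u \<and> (\<forall>t>0. h t = Top n \<Phi> M u t)}"

end

theory Submission
  imports Defs
begin

lemma ennreal_approx_above:
  fixes y w :: ennreal
  assumes "y < w" "y < \<infinity>"
  shows "\<exists>k. y + ennreal (inverse (real (Suc k))) < w"
proof -
  have "(\<lambda>k. y + ennreal (inverse (real (Suc k)))) \<longlonglongrightarrow> y + ennreal 0"
    by (intro tendsto_intros LIMSEQ_inverse_real_of_nat)
  then have "(\<lambda>k. y + ennreal (inverse (real (Suc k)))) \<longlonglongrightarrow> y" by simp
  from order_tendstoD(2)[OF this assms(1)] show ?thesis
    unfolding eventually_sequentially by blast
qed

lemma rearr_le_iff: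
  assumes g: "g \<in> borel_measurable M" and y: "0 < y"
  shows "rearr M g t \<le> y \<longleftrightarrow> emeasure M {x\<in>space M. y < g x} \<le> ennreal t"
proof
  assume "emeasure M {x\<in>space M. y < g x} \<le> ennreal t"
  then show "rearr M g t \<le> y" unfolding rearr_def using y by (auto intro: Inf_lower)
next
  assume le: "rearr M g t \<le> y"
  define d where "d z = emeasure M {x\<in>space M. z < g x}" for z
  have meas: "{x\<in>space M. z < g x} \<in> sets M" for z using g by measurable
  have anti: "d z2 \<le> d z1" if "z1 \<le> z2" for z1 z2
    unfolding d_def using that meas by (intro emeasure_mono) auto
  show "d y \<le> ennreal t"
  proof (cases "y = \<infinity>")
    case True
    then show ?thesis by (simp add: d_def)
  next
    case False
    then have yf: "y < \<infinity>" by (simp add: top.not_eq_extremum)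
    define A where "A k = {x\<in>space M. y + ennreal (inverse (real (Suc k))) < g x}" for k
    have each: "emeasure M (A k) \<le> ennreal t" for k
    proof -
      have "y < y + ennreal (inverse (real (Suc k)))"
        using ennreal_add_left_cancel_less[of y 0 "ennreal (inverse (real (Suc k)))"] yf by simp
      then have "rearr M g t < y + ennreal (inverse (real (Suc k)))" using le by (rule order.strict_trans1[rotated])
      then obtain z where z: "0 < z" "d z \<le> ennreal t" "z < y + ennreal (inverse (real (Suc k)))"
        unfolding rearr_def Inf_less_iff d_def by auto
      have "emeasure M (A k) = d (y + ennreal (inverse (real (Suc k))))" by (simp add: A_def d_def)
      also have "\<dots> \<le> d z" using z by (intro anti) simp
      finally show ?thesis using z by simp
    qed
    have inc: "incseq A"
    proof (rule incseq_SucI)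
      fix k
      have "ennreal (inverse (real (Suc (Suc k)))) \<le> ennreal (inverse (real (Suc k)))"
        by (intro ennreal_leI) (simp add: field_simps)
      then show "A k \<subseteq> A (Suc k)" unfolding A_def
        by (auto intro: order.strict_trans1[rotated] add_left_mono)
    qed
    have U: "(\<Union>k. A k) = {x\<in>space M. y < g x}"
    proof
      show "(\<Union>k. A k) \<subseteq> {x\<in>space M. y < g x}" unfolding A_def
        by (auto intro: order.strict_trans1[rotated] add_increasing2)
      show "{x\<in>space M. y < g x} \<subseteq> (\<Union>k. A k)"
        unfolding A_def using ennreal_approx_above[OF _ yf] by blast
    qed
    have "range A \<subseteq> sets M" unfolding A_def using meas by auto
    from SUP_emeasure_incseq[OF this inc] U have "d y = (SUP k. emeasure M (A k))"
      by (simp add: d_def)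
    also have "\<dots> \<le> ennreal t" using each by (simp add: SUP_le_iff)
    finally show ?thesis .
  qed
qed

lemma rearr_gt_iff:
  assumes g: "g \<in> borel_measurable M" and y: "0 < y"
  shows "y < rearr M g t \<longleftrightarrow> ennreal t < emeasure M {x\<in>space M. y < g x}"
  using rearr_le_iff[OF assms, of t] by (simp add: not_le[symmetric])

lemma rearr_antimono:
  assumes "s \<le> t" shows "rearr M g t \<le> rearr M g s"
  unfolding rearr_def
proof (rule Inf_superset_mono)
  have "ennreal s \<le> ennreal t" using assms by (rule ennreal_leI)
  then show "{y. 0 < y \<and> emeasure M {x \<in> space M. y < g x} \<le> ennreal s}
    \<subseteq> {y. 0 < y \<and> emeasure M {x \<in> space M. y < g x} \<le> ennreal t}" by auto
qed

lemma downclosed_borel: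
  fixes D :: "real set"
  assumes dc: "\<And>x y. x \<in> D \<Longrightarrow> y \<le> x \<Longrightarrow> y \<in> D"
  shows "D \<in> sets borel"
proof (cases "D = UNIV \<or> D = {}")
  case True then show ?thesis by auto
next
  case False
  then obtain z d where z: "z \<notin> D" and d: "d \<in> D" by auto
  have bdd: "bdd_above D"
    unfolding bdd_above_def using dc z by (metis linear)
  have "D = {..<Sup D} \<union> (D \<inter> {Sup D})"
  proof (intro equalityI subsetI)
    fix x assume "x \<in> D"
    then have "x \<le> Sup D" using bdd by (rule cSup_upper)
    then show "x \<in> {..<Sup D} \<union> (D \<inter> {Sup D})" using \<open>x \<in> D\<close> by auto
  next
    fix x assume x: "x \<in> {..<Sup D} \<union> (D \<inter> {Sup D})"
    show "x \<in> D"
    proof (cases "x < Sup D")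
      case True
      then obtain e where "e \<in> D" "x < e" using less_cSupD[of D x] d by auto
      then show ?thesis using dc by auto
    next
      case False then show ?thesis using x by auto
    qed
  qed
  moreover have "D \<inter> {Sup D} \<in> sets borel"
    by (cases "Sup D \<in> D") auto
  ultimately show ?thesis by (metis borel_open open_lessThan sets.Un)
qed

lemma antimono_borel:
  fixes F :: "real \<Rightarrow> ennreal"
  assumes "\<And>s t. s \<le> t \<Longrightarrow> F t \<le> F s"
  shows "F \<in> borel_measurable borel"
proof (rule borel_measurableI_greater)
  fix y
  have "{x. y < F x} \<in> sets borel"
    by (rule downclosed_borel) (auto intro: order.strict_trans2 assms)
  then show "{x \<in> space borel. y < F x} \<in> sets borel" by simp
qed

lemma borel_to_halfline:
  "f \<in> borel_measurable borel \<Longrightarrow> f \<in> borel_measurable halfline"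
  unfolding halfline_def
  by (intro measurable_restrict_space1 measurable_completion) simp

lemma rearr_borel: "rearr M g \<in> borel_measurable borel"
  by (rule antimono_borel) (rule rearr_antimono)

lemma rearr_halfline_meas: "rearr M g \<in> borel_measurable halfline"
  by (rule borel_to_halfline[OF rearr_borel])

lemma space_halfline: "space halfline = {0<..}"
  by (simp add: halfline_def space_restrict_space)

lemma emeasure_halfline:
  assumes "A \<in> sets borel" "A \<subseteq> {0<..}"
  shows "emeasure halfline A = emeasure lborel A"
  unfolding halfline_def using assms
  by (subst emeasure_restrict_space) auto

lemma emeasure_lborel_Ioi_top: "emeasure lborel {0::real<..} = \<infinity>"
proof -
  have "of_nat n \<le> emeasure lborel {0::real<..}" for n
  proof -
    have "emeasure lborel {0::real<..<of_nat n} \<le> emeasure lborel {0::real<..}"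
      by (intro emeasure_mono) auto
    then show ?thesis by (simp add: ennreal_of_nat_eq_real_of_nat)
  qed
  then have "(SUP n. of_nat n :: ennreal) \<le> emeasure lborel {0::real<..}"
    by (simp add: SUP_le_iff)
  then show ?thesis by (simp add: ennreal_SUP_of_nat_eq_top top_unique)
qed

lemma dist_rearr:
  assumes g: "g \<in> borel_measurable M" and y: "0 < y"
  shows "emeasure halfline {t\<in>space halfline. y < rearr M g t} = emeasure M {x\<in>space M. y < g x}"
proof -
  define d where "d = emeasure M {x\<in>space M. y < g x}"
  have eq: "{t\<in>space halfline. y < rearr M g t} = {t. 0 < t \<and> ennreal t < d}"
    using rearr_gt_iff[OF g y] by (auto simp: space_halfline d_def)
  show ?thesis
  proof (cases "d = \<infinity>")
    case True
    then have "{t. 0 < t \<and> ennreal t < d} = {0<..}" by auto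
    then show ?thesis using True eq emeasure_halfline[of "{0<..}"] emeasure_lborel_Ioi_top
      by (simp add: d_def)
  next
    case False
    then obtain r where r: "d = ennreal r" "0 \<le> r" by (cases d) auto
    then have "{t. 0 < t \<and> ennreal t < d} = {0<..<r}"
      by (auto simp: ennreal_less_iff)
    moreover have "emeasure halfline {0<..<r} = emeasure lborel {0<..<r}"
      by (rule emeasure_halfline) auto
    ultimately show ?thesis using r eq
      by (simp add: d_def[symmetric])
  qed
qed

lemma rearr_rearr:
  assumes g: "g \<in> borel_measurable M"
  shows "rearr halfline (rearr M g) = rearr M g"
proof
  fix t
  have "{y. 0<y \<and> emeasure halfline {s\<in>space halfline. y < rearr M g s} \<le> ennreal t}
     = {y. 0 < y \<and> emeasure M {x\<in>space M. y < g x} \<le> ennreal t}"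
    using dist_rearr[OF g] by auto
  then show "rearr halfline (rearr M g) t = rearr M g t"
    unfolding rearr_def[of halfline "rearr M g" t] by (simp only: rearr_def[of M g t])
qed

lemma RI_rearr:
  assumes R: "RIS halfline \<rho>" and g: "g \<in> borel_measurable halfline"
  shows "\<rho> (rearr halfline g) = \<rho> g"
  using R rearr_rearr[OF g] rearr_halfline_meas[of halfline g] g
  unfolding RIS_def rearrangement_invariant_def
  by (metis order.antisym order_refl)

lemma fn_mono:
  assumes "function_norm M \<rho>" "f \<in> borel_measurable M" "g \<in> borel_measurable M"
    "AE x in M. g x \<le> f x"
  shows "\<rho> g \<le> \<rho> f"
  using assms unfolding function_norm_def by blast

lemma fn_eq:
  assumes "function_norm M \<rho>" "f \<in> borel_measurable M" "g \<in> borel_measurable M"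
    "AE x in M. g x = f x"
  shows "\<rho> g = \<rho> f"
proof -
  have "AE x in M. g x \<le> f x" "AE x in M. f x \<le> g x" using assms(4) by auto
  then show ?thesis using fn_mono[OF assms(1,2,3)] fn_mono[OF assms(1,3,2)] by (metis order.antisym)
qed

lemma fn_scale:
  assumes "function_norm M \<rho>" "f \<in> borel_measurable M" "0 \<le> a"
  shows "\<rho> (\<lambda>x. ennreal a * f x) = ennreal a * \<rho> f"
  using assms unfolding function_norm_def by blast

lemma fn_zero:
  assumes "function_norm M \<rho>" "f \<in> borel_measurable M"
  shows "\<rho> f = 0 \<longleftrightarrow> (AE x in M. f x = 0)"
  using assms unfolding function_norm_def by blast

lemma sets_halfline_borel:
  assumes "A \<in> sets borel" "A \<subseteq> {0<..}"
  shows "A \<in> sets halfline"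
proof -
  have "A = {0<..} \<inter> A" using assms(2) by auto
  moreover have "A \<in> sets lebesgue" using assms(1) by simp
  ultimately show ?thesis unfolding halfline_def sets_restrict_space by blast
qed

lemma ennreal_unbounded_contra:
  fixes p B :: ennreal
  assumes "0 < p" "B < \<infinity>" "\<And>a::real. 0 \<le> a \<Longrightarrow> ennreal a * p \<le> B"
  shows False
proof (cases "p = \<infinity>")
  case True
  then show False using assms(2) assms(3)[of 1] by simp
next
  case False
  then obtain q where q: "p = ennreal q" "0 < q" using assms(1) by (cases p) auto
  obtain b where b: "B = ennreal b" "0 \<le> b" using assms(2) by (cases B) auto
  have "ennreal ((b + 1) / q) * p = ennreal (b + 1)"
    using q b by (simp add: ennreal_mult[symmetric])
  then have "ennreal (b + 1) \<le> ennreal b" using assms(3)[of "(b+1)/q"] q b by simp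
  then show False using b by (simp add: ennreal_le_iff)
qed

lemma rearr_finite:
  assumes R: "RIS halfline \<rho>" and fin: "\<rho> (rearr M g) < \<infinity>" and t: "0 < t"
  shows "rearr M g t < \<infinity>"
proof (rule ccontr)
  assume "\<not> rearr M g t < \<infinity>"
  then have inf: "rearr M g t = \<infinity>" using top.not_eq_extremum by fastforce
  define I where "I = (indicator {0<..<t} :: real \<Rightarrow> ennreal)"
  have Imeas: "I \<in> borel_measurable halfline"
    unfolding I_def by (intro borel_to_halfline borel_measurable_indicator) simp
  have Fmeas: "rearr M g \<in> borel_measurable halfline" by (rule rearr_halfline_meas)
  have FN: "function_norm halfline \<rho>" using R by (simp add: RIS_def)
  have bound: "ennreal a * \<rho> I \<le> \<rho> (rearr M g)" if a: "0 \<le> a" for a :: real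
  proof -
    have le: "ennreal a * I x \<le> rearr M g x" for x
    proof (cases "x \<in> {0<..<t}")
      case True
      then have "rearr M g t \<le> rearr M g x" by (intro rearr_antimono) simp
      then show ?thesis using inf by (simp add: top_unique)
    qed (simp add: I_def)
    have m2: "(\<lambda>x. ennreal a * I x) \<in> borel_measurable halfline" using Imeas by measurable
    have "\<rho> (\<lambda>x. ennreal a * I x) \<le> \<rho> (rearr M g)"
      using le by (intro fn_mono[OF FN Fmeas m2]) simp
    moreover have "\<rho> (\<lambda>x. ennreal a * I x) = ennreal a * \<rho> I"
      by (rule fn_scale[OF FN Imeas a])
    ultimately show ?thesis by simp
  qed
  have "\<rho> I \<noteq> 0"
  proof
    assume "\<rho> I = 0"
    then have ae: "AE x in halfline. I x = 0" using fn_zero[OF FN Imeas] by blast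
    have N: "{0<..<t} \<in> sets halfline" by (rule sets_halfline_borel) auto
    have "{x\<in>space halfline. \<not> I x = 0} = {0<..<t}"
      by (auto simp: I_def space_halfline indicator_def)
    from AE_iff_measurable[OF N this] ae have "emeasure halfline {0<..<t} = 0" by simp
    moreover have "emeasure halfline {0<..<t} = emeasure lborel {0<..<t}"
      by (rule emeasure_halfline) auto
    ultimately show False using t by simp
  qed
  then show False using ennreal_unbounded_contra[OF _ fin bound] by (simp add: zero_less_iff_neq_zero)
qed

lemma emeasure_lebesgue_borel:
  "A \<in> sets borel \<Longrightarrow> emeasure lebesgue A = emeasure lborel A"
  by simp

lemma radial_dist:
  fixes d :: ennreal
  defines "c \<equiv> unit_ball_vol (real CARD('n))"
  shows "emeasure lebesgue {x::real^'n. ennreal (c * norm x ^ CARD('n)) < d} = d"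
proof -
  let ?n = "CARD('n)"
  have c: "0 < c" unfolding c_def by simp
  have n: "0 < ?n" by simp
  show ?thesis
  proof (cases "d = \<infinity>")
    case True
    then have "{x::real^'n. ennreal (c * norm x ^ ?n) < d} = UNIV" by auto
    then show ?thesis using True by simp
  next
    case False
    then obtain r where r: "d = ennreal r" "0 \<le> r" by (cases d) auto
    define R where "R = root ?n (r / c)"
    have R0: "0 \<le> R" unfolding R_def using r c by simp
    have "{x::real^'n. ennreal (c * norm x ^ ?n) < d} = ball 0 R"
    proof (intro equalityI subsetI)
      fix x :: "real^'n"
      have iff: "norm x < R \<longleftrightarrow> norm x ^ ?n < r / c"
        unfolding R_def using real_root_less_iff[OF n, of "norm x ^ ?n" "r / c"]
        by (simp add: real_root_power_cancel[OF n])
      have iff2: "ennreal (c * norm x ^ ?n) < d \<longleftrightarrow> c * norm x ^ ?n < r"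
        using r c by (simp add: ennreal_less_iff)
      have iff3: "c * norm x ^ ?n < r \<longleftrightarrow> norm x ^ ?n < r / c"
        using c by (simp add: field_simps)
      show "x \<in> ball 0 R" if "x \<in> {x. ennreal (c * norm x ^ ?n) < d}"
        using that iff iff2 iff3 by (simp add: dist_norm)
      show "x \<in> {x. ennreal (c * norm x ^ ?n) < d}" if "x \<in> ball 0 R"
        using that iff iff2 iff3 by (simp add: dist_norm)
    qed
    moreover have "emeasure lborel (ball (0::real^'n) R) = ennreal (c * R ^ ?n)"
      using R0 emeasure_ball[where c="0::real^'n" and r=R] by (simp add: c_def)
    moreover have "c * R ^ ?n = r" unfolding R_def using c r n by simp
    ultimately show ?thesis using r by simp
  qed
qed

lemma radial_rep:
  fixes g :: "real \<Rightarrow> ennreal"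
  assumes g: "g \<in> borel_measurable halfline" and fin: "\<And>t. 0 < t \<Longrightarrow> rearr halfline g t < \<infinity>"
  defines "c \<equiv> unit_ball_vol (real CARD('n))"
  defines "u \<equiv> \<lambda>x::real^'n. enn2real (rearr halfline g (c * norm x ^ CARD('n)))"
  shows "u \<in> borel_measurable lebesgue"
    and "rearr lebesgue (\<lambda>x. ennreal \<bar>u x\<bar>) = rearr halfline g"
proof -
  let ?n = "CARD('n)"
  let ?F = "rearr halfline g"
  have c: "0 < c" unfolding c_def by simp
  have Fb[measurable]: "?F \<in> borel_measurable borel" by (rule rearr_borel)
  have phib: "(\<lambda>x::real^'n. c * norm x ^ ?n) \<in> borel_measurable borel" by measurable
  have ub: "u \<in> borel_measurable borel"
    unfolding u_def using measurable_compose[OF phib Fb] by measurable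
  then show um: "u \<in> borel_measurable lebesgue"
    by (intro measurable_completion) simp
  have dist: "emeasure lebesgue {x\<in>space lebesgue. y < ennreal \<bar>u x\<bar>}
      = emeasure halfline {t\<in>space halfline. y < g t}" if y: "0 < y" for y
  proof -
    define d where "d = emeasure halfline {t\<in>space halfline. y < g t}"
    define S where "S = {x\<in>space lebesgue. y < ennreal \<bar>u x\<bar>}"
    define B where "B = {x::real^'n. ennreal (c * norm x ^ ?n) < d}"
    have Ss: "S \<in> sets lebesgue" unfolding S_def using um by measurable
    have "B \<in> sets borel" unfolding B_def using phib by measurable
    then have Bs: "B \<in> sets lebesgue" by simp
    have N: "{0::real^'n} \<in> null_sets lebesgue"
      by (intro null_sets_completionI finite_imp_null_set_lborel) simp
    have "S - {0} = B - {0}"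
    proof (intro equalityI subsetI)
      fix x assume x: "x \<in> S - {0}"
      then have pos: "0 < c * norm x ^ ?n" using c by auto
      then have "ennreal \<bar>u x\<bar> = ?F (c * norm x ^ ?n)"
        using fin[OF pos] by (simp add: u_def less_top)
      then show "x \<in> B - {0}" using x rearr_gt_iff[OF g y] by (simp add: S_def B_def d_def)
    next
      fix x assume x: "x \<in> B - {0}"
      then have pos: "0 < c * norm x ^ ?n" using c by auto
      then have "ennreal \<bar>u x\<bar> = ?F (c * norm x ^ ?n)"
        using fin[OF pos] by (simp add: u_def less_top)
      then show "x \<in> S - {0}" using x rearr_gt_iff[OF g y] by (simp add: S_def B_def d_def)
    qed
    then have "emeasure lebesgue S = emeasure lebesgue B"
      using emeasure_Diff_null_set[OF N Ss] emeasure_Diff_null_set[OF N Bs] by simp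
    also have "\<dots> = d" unfolding B_def c_def by (rule radial_dist)
    finally show ?thesis by (simp add: S_def d_def)
  qed
  show "rearr lebesgue (\<lambda>x. ennreal \<bar>u x\<bar>) = ?F"
  proof
    fix t
    have "{y. 0<y \<and> emeasure lebesgue {x\<in>space lebesgue. y < ennreal \<bar>u x\<bar>} \<le> ennreal t}
       = {y. 0 < y \<and> emeasure halfline {s\<in>space halfline. y < g s} \<le> ennreal t}"
      using dist by auto
    then show "rearr lebesgue (\<lambda>x. ennreal \<bar>u x\<bar>) t = ?F t"
      unfolding rearr_def by simp
  qed
qed

lemma mult_Inf_bound:
  fixes x :: ennreal
  assumes c: "0 < c" and b: "\<And>s. s \<in> S \<Longrightarrow> x \<le> ennreal c * s"
  shows "x \<le> ennreal c * Inf S"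
proof -
  have cz: "ennreal c \<noteq> 0" "ennreal c \<noteq> top" using c by auto
  have "x / ennreal c \<le> Inf S"
  proof (rule Inf_greatest)
    fix s assume "s \<in> S"
    then have "x / ennreal c \<le> (s * ennreal c) / ennreal c"
      using b by (intro divide_right_mono_ennreal) (simp add: mult.commute)
    also have "\<dots> = s" using cz by (rule ennreal_mult_divide_eq)
    finally show "x / ennreal c \<le> s" .
  qed
  then have "ennreal c * (x / ennreal c) \<le> ennreal c * Inf S" by (rule mult_left_mono) simp
  moreover have "ennreal c * (x / ennreal c) = x"
    using ennreal_mult_divide_eq[OF cz, of x] by (simp add: ennreal_times_divide mult.commute)
  ultimately show ?thesis by simp
qed

lemma Top_cong:
  assumes "rearr M (\<lambda>x. ennreal \<bar>u x\<bar>) = rearr N (\<lambda>x. ennreal \<bar>f x\<bar>)"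
  shows "Top n \<Phi> M u = Top n \<Phi> N f"
  unfolding Top_def dstar_def assms ..

theorem theorem4p2:
  fixes \<rho>E \<rho>X :: "(real^'n \<Rightarrow> ennreal) \<Rightarrow> ennreal"
    and \<rho>Et \<rho>Xt :: "(real \<Rightarrow> ennreal) \<Rightarrow> ennreal"
    and \<Phi> :: "real \<Rightarrow> real"
  assumes "RIS (lebesgue :: (real^'n) measure) \<rho>E"
    and "RIS (lebesgue :: (real^'n) measure) \<rho>X"
    and "luxemburg_rep (lebesgue :: (real^'n) measure) \<rho>E \<rho>Et"
    and "luxemburg_rep (lebesgue :: (real^'n) measure) \<rho>X \<rho>Xt"
    and "class_B CARD('n) \<Phi>"
  shows "(\<exists>C>0. \<forall>h\<in>K3 CARD('n) \<Phi> (lebesgue :: (real^'n) measure) \<rho>E.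
            h \<in> borel_measurable halfline \<and> \<rho>Xt h < \<infinity> \<and>
            \<rho>Xt h \<le> ennreal C * rho_K3 CARD('n) \<Phi> (lebesgue :: (real^'n) measure) \<rho>E h)
         \<longleftrightarrow>
         (\<exists>C>0. \<forall>f. in_space halfline \<rho>Et f \<longrightarrow>
            Top CARD('n) \<Phi> halfline f \<in> borel_measurable halfline \<and>
            \<rho>Xt (Top CARD('n) \<Phi> halfline f) \<le> ennreal C * \<rho>Et (\<lambda>x. ennreal \<bar>f x\<bar>))"
proof -
  let ?n = "CARD('n)"
  have RE: "RIS halfline \<rho>Et" and luxE: "\<And>f. f \<in> borel_measurable lebesgue \<Longrightarrow> \<rho>E f = \<rho>Et (rearr lebesgue f)"
    using assms(3) unfolding luxemburg_rep_def by auto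
  have RX: "RIS halfline \<rho>Xt" using assms(4) unfolding luxemburg_rep_def by auto
  have FNE: "function_norm halfline \<rho>Et" using RE by (simp add: RIS_def)
  have FNX: "function_norm halfline \<rho>Xt" using RX by (simp add: RIS_def)
  show ?thesis
  proof
    assume "\<exists>C>0. \<forall>h\<in>K3 ?n \<Phi> (lebesgue :: (real^'n) measure) \<rho>E.
            h \<in> borel_measurable halfline \<and> \<rho>Xt h < \<infinity> \<and>
            \<rho>Xt h \<le> ennreal C * rho_K3 ?n \<Phi> (lebesgue :: (real^'n) measure) \<rho>E h"
    then obtain C where C: "C > 0" and H: "\<And>h. h \<in> K3 ?n \<Phi> (lebesgue :: (real^'n) measure) \<rho>E \<Longrightarrow>
            h \<in> borel_measurable halfline \<and> \<rho>Xt h < \<infinity> \<and>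
            \<rho>Xt h \<le> ennreal C * rho_K3 ?n \<Phi> (lebesgue :: (real^'n) measure) \<rho>E h" by blast
    show "\<exists>C>0. \<forall>f. in_space halfline \<rho>Et f \<longrightarrow>
            Top ?n \<Phi> halfline f \<in> borel_measurable halfline \<and>
            \<rho>Xt (Top ?n \<Phi> halfline f) \<le> ennreal C * \<rho>Et (\<lambda>x. ennreal \<bar>f x\<bar>)"
    proof (intro exI[of _ C] conjI allI impI C)
      fix f assume f: "in_space halfline \<rho>Et f"
      define g where "g = (\<lambda>x. ennreal \<bar>f x\<bar>)"
      have fm0: "f \<in> borel_measurable halfline" using f by (simp add: in_space_def)
      have gm: "g \<in> borel_measurable halfline" unfolding g_def using fm0 by measurable
      have gfin: "\<rho>Et g < \<infinity>" using f unfolding g_def in_space_def by simp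
      have "\<rho>Et (rearr halfline g) < \<infinity>" using RI_rearr[OF RE gm] gfin by simp
      then have fin: "\<And>t. 0 < t \<Longrightarrow> rearr halfline g t < \<infinity>"
        by (rule rearr_finite[OF RE])
      define u where "u = (\<lambda>x::real^'n. enn2real (rearr halfline g (unit_ball_vol (real ?n) * norm x ^ ?n)))"
      have um: "u \<in> borel_measurable lebesgue" and rr: "rearr lebesgue (\<lambda>x. ennreal \<bar>u x\<bar>) = rearr halfline g"
        using radial_rep[OF gm fin] unfolding u_def by auto
      have uam: "(\<lambda>x. ennreal \<bar>u x\<bar>) \<in> borel_measurable lebesgue" using um by measurable
      have normu: "\<rho>E (\<lambda>x. ennreal \<bar>u x\<bar>) = \<rho>Et g"
        using luxE[OF uam] rr RI_rearr[OF RE gm] by simp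
      have uin: "in_space lebesgue \<rho>E u" using um normu gfin by (simp add: in_space_def)
      have TT: "Top ?n \<Phi> lebesgue u = Top ?n \<Phi> halfline f"
        by (rule Top_cong) (simp add: rr g_def)
      have hK: "Top ?n \<Phi> halfline f \<in> K3 ?n \<Phi> (lebesgue :: (real^'n) measure) \<rho>E"
        unfolding K3_def using uin TT by auto
      have "rho_K3 ?n \<Phi> (lebesgue :: (real^'n) measure) \<rho>E (Top ?n \<Phi> halfline f) \<le> \<rho>E (\<lambda>x. ennreal \<bar>u x\<bar>)"
        unfolding rho_K3_def using uin TT by (intro Inf_lower) auto
      then have "ennreal C * rho_K3 ?n \<Phi> (lebesgue :: (real^'n) measure) \<rho>E (Top ?n \<Phi> halfline f) \<le> ennreal C * \<rho>Et g"
        using normu by (intro mult_left_mono) auto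
      then show "Top ?n \<Phi> halfline f \<in> borel_measurable halfline"
        "\<rho>Xt (Top ?n \<Phi> halfline f) \<le> ennreal C * \<rho>Et (\<lambda>x. ennreal \<bar>f x\<bar>)"
        using H[OF hK] unfolding g_def by auto
    qed
  next
    assume "\<exists>C>0. \<forall>f. in_space halfline \<rho>Et f \<longrightarrow>
            Top ?n \<Phi> halfline f \<in> borel_measurable halfline \<and>
            \<rho>Xt (Top ?n \<Phi> halfline f) \<le> ennreal C * \<rho>Et (\<lambda>x. ennreal \<bar>f x\<bar>)"
    then obtain C where C: "C > 0" and T: "\<And>f. in_space halfline \<rho>Et f \<Longrightarrow>
            Top ?n \<Phi> halfline f \<in> borel_measurable halfline \<and>
            \<rho>Xt (Top ?n \<Phi> halfline f) \<le> ennreal C * \<rho>Et (\<lambda>x. ennreal \<bar>f x\<bar>)" by blast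
    have key: "h \<in> borel_measurable halfline \<and> \<rho>Xt h \<le> ennreal C * \<rho>E (\<lambda>x. ennreal \<bar>u x\<bar>)"
      if u: "in_space lebesgue \<rho>E u" and hu: "\<forall>t>0. h t = Top ?n \<Phi> lebesgue u t" for h u
    proof -
      define g where "g = (\<lambda>x::real^'n. ennreal \<bar>u x\<bar>)"
      have um0: "u \<in> borel_measurable lebesgue" using u by (simp add: in_space_def)
      have gm: "g \<in> borel_measurable lebesgue" unfolding g_def using um0 by measurable
      define F where "F = rearr lebesgue g"
      have Fn: "\<rho>Et F = \<rho>E g" using luxE[OF gm] by (simp add: F_def)
      have gfin: "\<rho>E g < \<infinity>" using u unfolding g_def in_space_def by simp
      have fin: "\<And>t. 0 < t \<Longrightarrow> F t < \<infinity>"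
        unfolding F_def by (rule rearr_finite[OF RE]) (use Fn gfin F_def in simp)
      define f where "f = (\<lambda>t. enn2real (F t))"
      have Fb[measurable]: "F \<in> borel_measurable borel" unfolding F_def by (rule rearr_borel)
      have fm: "f \<in> borel_measurable halfline" unfolding f_def
        by (intro borel_to_halfline) measurable
      have Fh: "F \<in> borel_measurable halfline" by (rule borel_to_halfline[OF Fb])
      have fam: "(\<lambda>x. ennreal \<bar>f x\<bar>) \<in> borel_measurable halfline" using fm by measurable
      have feq: "ennreal \<bar>f t\<bar> = F t" if "t \<in> space halfline" for t
        using that fin[of t] by (simp add: space_halfline f_def less_top)
      have fnorm: "\<rho>Et (\<lambda>x. ennreal \<bar>f x\<bar>) = \<rho>E g"
        using fn_eq[OF FNE Fh fam] feq Fn by (simp add: AE_I2)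
      have fin_f: "in_space halfline \<rho>Et f" using fm fnorm gfin by (simp add: in_space_def)
      have "rearr halfline (\<lambda>x. ennreal \<bar>f x\<bar>) = rearr halfline F"
        unfolding rearr_def using feq by (intro ext arg_cong[where f=Inf] Collect_cong conj_cong refl arg_cong[where f="\<lambda>A. emeasure halfline A \<le> _"]) auto
      also have "\<dots> = F" unfolding F_def by (rule rearr_rearr[OF gm])
      finally have "rearr lebesgue (\<lambda>x. ennreal \<bar>u x\<bar>) = rearr halfline (\<lambda>x. ennreal \<bar>f x\<bar>)"
        by (simp add: F_def g_def)
      then have TT: "Top ?n \<Phi> lebesgue u = Top ?n \<Phi> halfline f" by (rule Top_cong)
      have Tf: "Top ?n \<Phi> halfline f \<in> borel_measurable halfline"
        "\<rho>Xt (Top ?n \<Phi> halfline f) \<le> ennreal C * \<rho>E g"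
        using T[OF fin_f] fnorm by auto
      have heq: "h t = Top ?n \<Phi> halfline f t" if "t \<in> space halfline" for t
        using that hu TT by (simp add: space_halfline)
      have hm: "h \<in> borel_measurable halfline"
        using Tf(1) measurable_cong[of halfline h "Top ?n \<Phi> halfline f"] heq by simp
      have "\<rho>Xt h = \<rho>Xt (Top ?n \<Phi> halfline f)"
        using fn_eq[OF FNX Tf(1) hm] heq by (simp add: AE_I2)
      then show ?thesis using hm Tf(2) by (simp add: g_def)
    qed
    show "\<exists>C>0. \<forall>h\<in>K3 ?n \<Phi> (lebesgue :: (real^'n) measure) \<rho>E.
            h \<in> borel_measurable halfline \<and> \<rho>Xt h < \<infinity> \<and>
            \<rho>Xt h \<le> ennreal C * rho_K3 ?n \<Phi> (lebesgue :: (real^'n) measure) \<rho>E h"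
    proof (intro exI[of _ C] conjI ballI C)
      fix h assume "h \<in> K3 ?n \<Phi> (lebesgue :: (real^'n) measure) \<rho>E"
      then obtain u0 where u0: "in_space lebesgue \<rho>E u0" "\<forall>t>0. h t = Top ?n \<Phi> lebesgue u0 t"
        unfolding K3_def by auto
      show "h \<in> borel_measurable halfline" using key[OF u0] by simp
      have "\<rho>Xt h \<le> ennreal C * \<rho>E (\<lambda>x. ennreal \<bar>u0 x\<bar>)" using key[OF u0] by simp
      also have "\<dots> < \<infinity>" using u0(1) by (simp add: in_space_def ennreal_mult_less_top)
      finally show "\<rho>Xt h < \<infinity>" .
      show "\<rho>Xt h \<le> ennreal C * rho_K3 ?n \<Phi> (lebesgue :: (real^'n) measure) \<rho>E h"
        unfolding rho_K3_def using key C by (intro mult_Inf_bound) auto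
    qed
  qed
qed

end
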